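(* Let $r,t\geq 2$ be integers and let $G_r$ be any graph on $r$ vertices. Let $G_{r,t}$ be the graph obtained from $G_r$ by attaching $t$ new pendant vertices to each vertex of $G_r$ (so $G_{r,t}$ has $r(t+1)$ vertices). Then $\rho(G_{r,t})=r$, and for every integer $n\geq t$, $\rho(G_{r,t}\square K_n)=rt$.
   Context: All graphs are finite and simple. A set $P\subseteq V(G)$ is a packing of $G$ if $N[u]\cap N[v]=\emptyset$ for all distinct $u,v\in P$, where $N[u]$ is the closed neighborhood of $u$; the packing number $\rho(G)$ is the maximum cardinality of a packing of $G$. $K_n$ is the complete graph on $n$ vertices. The Cartesian product $G\square H$ has vertex set $V(G)\times V(H)$, with $(g,h)$ adjacent to $(g',h')$ iff ($gg'\in E(G)$ and $h=h'$) or ($g=g'$ and $hh'\in E(H)$). *)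

theory Defs
  imports Main
begin

definition simple_graph :: "'a set \<Rightarrow> ('a \<Rightarrow> 'a \<Rightarrow> bool) \<Rightarrow> bool" where
  "simple_graph V E \<longleftrightarrow> finite V \<and> (\<forall>u v. E u v \<longrightarrow> u \<in> V \<and> v \<in> V)
     \<and> (\<forall>u v. E u v \<longrightarrow> E v u) \<and> (\<forall>u. \<not> E u u)"

definition closed_nbhd :: "'a set \<Rightarrow> ('a \<Rightarrow> 'a \<Rightarrow> bool) \<Rightarrow> 'a \<Rightarrow> 'a set" where
  "closed_nbhd V E u = {v \<in> V. v = u \<or> E u v}"

definition packing :: "'a set \<Rightarrow> ('a \<Rightarrow> 'a \<Rightarrow> bool) \<Rightarrow> 'a set \<Rightarrow> bool" where
  "packing V E P \<longleftrightarrow> P \<subseteq> V \<and>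
     (\<forall>u\<in>P. \<forall>v\<in>P. u \<noteq> v \<longrightarrow> closed_nbhd V E u \<inter> closed_nbhd V E v = {})"

definition packing_number :: "'a set \<Rightarrow> ('a \<Rightarrow> 'a \<Rightarrow> bool) \<Rightarrow> nat" where
  "packing_number V E = Max (card ` {P. packing V E P})"

definition complete_V :: "nat \<Rightarrow> nat set" where
  "complete_V n = {0..<n}"

definition complete_E :: "nat \<Rightarrow> nat \<Rightarrow> nat \<Rightarrow> bool" where
  "complete_E n u v \<longleftrightarrow> u < n \<and> v < n \<and> u \<noteq> v"

definition cart_V :: "'a set \<Rightarrow> 'b set \<Rightarrow> ('a \<times> 'b) set" where
  "cart_V V1 V2 = V1 \<times> V2"

definition cart_E :: "('a \<Rightarrow> 'a \<Rightarrow> bool) \<Rightarrow> ('b \<Rightarrow> 'b \<Rightarrow> bool) \<Rightarrow> 'a \<times> 'b \<Rightarrow> 'a \<times> 'b \<Rightarrow> bool" where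
  "cart_E E1 E2 x y \<longleftrightarrow> (E1 (fst x) (fst y) \<and> snd x = snd y) \<or> (fst x = fst y \<and> E2 (snd x) (snd y))"

text \<open>G_{r,t}: attach t pendant vertices to each vertex of G. Vertex (v, None) is the
  original vertex v; (v, Some i), i < t, are the pendant vertices attached to v.\<close>
definition pendant_V :: "'a set \<Rightarrow> nat \<Rightarrow> ('a \<times> nat option) set" where
  "pendant_V V t = {(v, None) | v. v \<in> V} \<union> {(v, Some i) | v i. v \<in> V \<and> i < t}"

definition pendant_E :: "'a set \<Rightarrow> ('a \<Rightarrow> 'a \<Rightarrow> bool) \<Rightarrow> nat \<Rightarrow> 'a \<times> nat option \<Rightarrow> 'a \<times> nat option \<Rightarrow> bool" where
  "pendant_E V E t x y \<longleftrightarrow> x \<in> pendant_V V t \<and> y \<in> pendant_V V t \<and>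
     ((snd x = None \<and> snd y = None \<and> E (fst x) (fst y))
      \<or> (fst x = fst y \<and> ((snd x = None \<and> snd y \<noteq> None) \<or> (snd x \<noteq> None \<and> snd y = None))))"

end

theory Submission imports Defs begin
lemma pV_None[simp]: "(v, None) \<in> pendant_V V t \<longleftrightarrow> v \<in> V"
  unfolding pendant_V_def by auto
lemma pV_Some[simp]: "(v, Some i) \<in> pendant_V V t \<longleftrightarrow> v \<in> V \<and> i < t"
  unfolding pendant_V_def by auto
lemma pE_Some[simp]: "pendant_E V E t (v, Some i) y \<longleftrightarrow> v \<in> V \<and> i < t \<and> y = (v, None)"
  unfolding pendant_E_def by (cases y) auto
lemma pE_None_Some[simp]: "pendant_E V E t (v, None) (w, Some j) \<longleftrightarrow> v \<in> V \<and> j < t \<and> w = v"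
  unfolding pendant_E_def by auto
lemma pE_None_None[simp]: "pendant_E V E t (v, None) (w, None) \<longleftrightarrow> v \<in> V \<and> w \<in> V \<and> E v w"
  unfolding pendant_E_def by auto
lemma cn_cart: "x \<in> closed_nbhd (cart_V V1 V2) (cart_E E1 E2) (a,b) \<longleftrightarrow>
   x \<in> V1 \<times> V2 \<and> (x = (a,b) \<or> (E1 a (fst x) \<and> snd x = b) \<or> (fst x = a \<and> E2 b (snd x)))"
  unfolding closed_nbhd_def cart_V_def cart_E_def by (cases x) auto

lemma cn_pS: "closed_nbhd (pendant_V V t) (pendant_E V E t) (v, Some i) \<subseteq> {(v, Some i), (v, None)}"
  unfolding closed_nbhd_def by auto

lemma lowpack: "t \<le> n \<Longrightarrow> packing (cart_V (pendant_V V t) (complete_V n)) (cart_E (pendant_E V E t) (complete_E n))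
   ((\<lambda>(v,i). ((v, Some i), i)) ` (V \<times> {0..<t}))"
  unfolding packing_def
proof (intro conjI ballI impI)
  assume "t \<le> n"
  show "(\<lambda>(v,i). ((v, Some i), i)) ` (V \<times> {0..<t}) \<subseteq> cart_V (pendant_V V t) (complete_V n)"
    using \<open>t \<le> n\<close> by (auto simp: cart_V_def complete_V_def)
  fix p q assume "p \<in> (\<lambda>(v,i). ((v, Some i), i)) ` (V \<times> {0..<t})" "q \<in> (\<lambda>(v,i). ((v, Some i), i)) ` (V \<times> {0..<t})" "p \<noteq> q"
  then obtain v i w j where p: "p = ((v, Some i), i)" and q: "q = ((w, Some j), j)"
     by force
  with \<open>p \<noteq> q\<close> have ne: "(v,i) \<noteq> (w,j)" by auto
  show "closed_nbhd (cart_V (pendant_V V t) (complete_V n)) (cart_E (pendant_E V E t) (complete_E n)) p \<inter>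
     closed_nbhd (cart_V (pendant_V V t) (complete_V n)) (cart_E (pendant_E V E t) (complete_E n)) q = {}"
  proof (rule ccontr)
    assume "\<not> ?thesis"
    then obtain x where "x \<in> closed_nbhd (cart_V (pendant_V V t) (complete_V n)) (cart_E (pendant_E V E t) (complete_E n)) p"
      "x \<in> closed_nbhd (cart_V (pendant_V V t) (complete_V n)) (cart_E (pendant_E V E t) (complete_E n)) q" by blast
    then show False unfolding p q cn_cart using ne by (auto simp: complete_E_def)
  qed
qed
lemma pn_eq:
  assumes "finite V" "packing V E P0" "card P0 = m"
    "\<And>P. packing V E P \<Longrightarrow> card P \<le> m"
  shows "packing_number V E = m"
  unfolding packing_number_def
proof (rule Max_eqI)
  have "card ` {P. packing V E P} \<subseteq> card ` Pow V" unfolding packing_def by auto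
  thus "finite (card ` {P. packing V E P})" using assms(1) by (meson finite_Pow_iff finite_imageI finite_subset)
  show "m \<in> card ` {P. packing V E P}" using assms(2,3) by (simp add: image_iff) (metis)
  fix a assume "a \<in> card ` {P. packing V E P}"
  then show "a \<le> m" using assms(4) by auto
qed

lemma packing_inj:
  assumes "finite V" "packing V E P" "\<And>p. p \<in> P \<Longrightarrow> f p \<in> S" "finite S"
    "\<And>p q. p \<in> P \<Longrightarrow> q \<in> P \<Longrightarrow> p \<noteq> q \<Longrightarrow> f p = f q \<Longrightarrow>
       closed_nbhd V E p \<inter> closed_nbhd V E q \<noteq> {}"
  shows "card P \<le> card S"
proof -
  have "inj_on f P" using assms(2,5) unfolding inj_on_def packing_def by blast
  thus ?thesis using card_inj_on_le assms(3,4) by blast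
qed

lemma finite_pendant: "finite V \<Longrightarrow> finite (pendant_V V t)"
proof -
  assume "finite V"
  have "pendant_V V t \<subseteq> V \<times> (insert None (Some ` {0..<t}))"
    unfolding pendant_V_def by auto
  thus ?thesis using \<open>finite V\<close> finite_subset by blast
qed

theorem mainTheorem2:
  fixes V :: "'a set" and E :: "'a \<Rightarrow> 'a \<Rightarrow> bool" and r t :: nat
  assumes "simple_graph V E" and "card V = r" and "r \<ge> 2" and "t \<ge> 2"
  shows "packing_number (pendant_V V t) (pendant_E V E t) = r \<and>
    (\<forall>n::nat. n \<ge> t \<longrightarrow>
       packing_number (cart_V (pendant_V V t) (complete_V n))
                      (cart_E (pendant_E V E t) (complete_E n)) = r * t)"
proof
  have fV: "finite V" using assms(1) unfolding simple_graph_def by auto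
  have irr: "\<And>u. \<not> E u u" using assms(1) unfolding simple_graph_def by auto
  show "packing_number (pendant_V V t) (pendant_E V E t) = r"
  proof (rule pn_eq)
    show "finite (pendant_V V t)" using fV finite_pendant by blast
    let ?P = "(\<lambda>v. (v, Some (0::nat))) ` V"
    show "packing (pendant_V V t) (pendant_E V E t) ?P"
      unfolding packing_def
    proof (intro conjI ballI impI)
      show "?P \<subseteq> pendant_V V t" using assms(4) by auto
      fix p q assume "p \<in> ?P" "q \<in> ?P" "p \<noteq> q"
      then obtain v w where p: "p = (v, Some (0::nat))" and q: "q = (w, Some (0::nat))" and "v \<noteq> w" by auto
      show "closed_nbhd (pendant_V V t) (pendant_E V E t) p \<inter>
            closed_nbhd (pendant_V V t) (pendant_E V E t) q = {}"
        using cn_pS[of V t E v 0] cn_pS[of V t E w 0] \<open>v \<noteq> w\<close> unfolding p q by blast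
    qed
    show "card ?P = r" using assms(2) by (simp add: card_image inj_on_def)
    fix P assume P: "packing (pendant_V V t) (pendant_E V E t) P"
    have "card P \<le> card V"
    proof (rule packing_inj[where f=fst])
      show "finite (pendant_V V t)" using fV finite_pendant by blast
      show "packing (pendant_V V t) (pendant_E V E t) P" by fact
      show "finite V" by fact
      show "\<And>p. p \<in> P \<Longrightarrow> fst p \<in> V" using P unfolding packing_def pendant_V_def by auto
      fix p q assume pq: "p \<in> P" "q \<in> P" "p \<noteq> q" "fst p = fst q"
      have key: "(fst p, None) \<in> closed_nbhd (pendant_V V t) (pendant_E V E t) p"
        if "p \<in> P" for p
      proof -
        have "p \<in> pendant_V V t" using P that unfolding packing_def by auto
        then obtain v o1 where p: "p = (v, o1)" "v \<in> V" by (auto simp: pendant_V_def)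
        show ?thesis using \<open>p \<in> pendant_V V t\<close> unfolding p closed_nbhd_def
          by (cases o1) auto
      qed
      from key[OF pq(1)] key[OF pq(2)]
      show "closed_nbhd (pendant_V V t) (pendant_E V E t) p \<inter>
            closed_nbhd (pendant_V V t) (pendant_E V E t) q \<noteq> {}"
        using pq by (metis disjoint_iff)
    qed
    thus "card P \<le> r" using assms(2) by simp
  qed
  show "\<forall>n::nat. n \<ge> t \<longrightarrow>
       packing_number (cart_V (pendant_V V t) (complete_V n))
                      (cart_E (pendant_E V E t) (complete_E n)) = r * t"
  proof (intro allI impI)
    fix n :: nat assume nt: "n \<ge> t"
    let ?V = "cart_V (pendant_V V t) (complete_V n)"
    let ?E = "cart_E (pendant_E V E t) (complete_E n)"
    show "packing_number ?V ?E = r * t"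
    proof (rule pn_eq)
      show fin: "finite ?V" using fV finite_pendant unfolding cart_V_def complete_V_def by blast
      let ?P = "(\<lambda>(v,i). ((v, Some i), i)) ` (V \<times> {0..<t})"
      show "packing ?V ?E ?P" using lowpack[OF nt] .
      show "card ?P = r * t" using assms(2)
        by (subst card_image) (auto simp: inj_on_def card_cartesian_product)
      fix P assume P: "packing ?V ?E P"
      let ?f = "\<lambda>p. (fst (fst p), case snd (fst p) of None \<Rightarrow> 0 | Some i \<Rightarrow> i)"
      have "card P \<le> card (V \<times> {0..<t})"
      proof (rule packing_inj[where f = ?f])
        show "finite ?V" by fact
        show "packing ?V ?E P" by fact
        show "finite (V \<times> {0..<t})" using fV by simp
        show "\<And>p. p \<in> P \<Longrightarrow> ?f p \<in> V \<times> {0..<t}"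
          using P assms(4) unfolding packing_def pendant_V_def cart_V_def
          by (auto split: option.splits)
        fix p q assume pq: "p \<in> P" "q \<in> P" "p \<noteq> q" "?f p = ?f q"
        obtain v o1 k where p: "p = ((v, o1), k)" by (metis prod.collapse)
        obtain w o2 l where q: "q = ((w, o2), l)" by (metis prod.collapse)
        have pV: "p \<in> ?V" and qV: "q \<in> ?V" using P pq unfolding packing_def by auto
        show "closed_nbhd ?V ?E p \<inter> closed_nbhd ?V ?E q \<noteq> {}"
        proof (cases o1)
          case None
          then show ?thesis
          proof (cases o2)
            case None
            have "p \<in> closed_nbhd ?V ?E p \<inter> closed_nbhd ?V ?E q"
              using pq pV qV \<open>o1 = None\<close> None unfolding p q Int_iff cn_cart
              by (auto simp: cart_V_def complete_E_def complete_V_def)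
            then show ?thesis by blast
          next
            case (Some j)
            have "((v, Some j), k) \<in> closed_nbhd ?V ?E p \<inter> closed_nbhd ?V ?E q"
              using pq pV qV \<open>o1 = None\<close> Some unfolding p q Int_iff cn_cart
              by (auto simp: cart_V_def complete_E_def complete_V_def)
            then show ?thesis by blast
          qed
        next
          case (Some i)
          then show ?thesis
          proof (cases o2)
            case None
            have "((v, Some i), l) \<in> closed_nbhd ?V ?E p \<inter> closed_nbhd ?V ?E q"
              using pq pV qV \<open>o1 = Some i\<close> None unfolding p q Int_iff cn_cart
              by (auto simp: cart_V_def complete_E_def complete_V_def)
            then show ?thesis by blast
          next
            case (Some j)
            have "p \<in> closed_nbhd ?V ?E p \<inter> closed_nbhd ?V ?E q"
              using pq pV qV \<open>o1 = Some i\<close> Some unfolding p q Int_iff cn_cart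
              by (auto simp: cart_V_def complete_E_def complete_V_def)
            then show ?thesis by blast
          qed
        qed
      qed
      thus "card P \<le> r * t" using assms(2) by (simp add: card_cartesian_product)
    qed
  qed
qed

end
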